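(* Let $(\widetilde M,\widetilde{\mathcal C})$ be a causal manifold with partial order $\preceq$, let $T\in G(\widetilde M,\widetilde{\mathcal C})$ generate an infinite cyclic group $\Gamma$ acting properly discontinuously on $\widetilde M$, let $p:\widetilde M\to M=\Gamma\backslash\widetilde M$ be a causal covering, and assume (after replacing $T$ by $T^{-1}$ if necessary) that $T$ is dominant. Let $\check G$ be the centralizer of $T$ in $G(\widetilde M,\widetilde{\mathcal C})$ and $G=\check G/\Gamma$, acting on $M$. If $G$ acts almost $2$-transitively on $M$, then $p$ is quasi-total, i.e. there is $N\in\mathbb{N}$ such that for all $a,b\in\widetilde M$ some $k\in\{0,\dots,N\}$ satisfies $a\preceq T^kb$ or $b\preceq T^ka$ (so $(\widetilde M,\preceq,T)$ is a quasi-total triple).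
   Context: A cone field $\mathcal C$ on a manifold is a smoothly varying choice of closed pointed regular convex cones $\mathcal C_x\subset T_xM$. A piecewise smooth curve is causal if its derivative lies in the cone field at all but finitely many times; $x\preceq_s y$ iff a causal curve joins $x$ to $y$, and $\preceq$ is the closure of $\preceq_s$ in $M\times M$. The conal manifold is causal if $\preceq$ is a partial order and totally acausal if $\preceq=M\times M$. $G(M,\mathcal C)$ is the group of diffeomorphisms preserving the cone field ($d\phi(\mathcal C_m)=\mathcal C_{\phi(m)}$). $M$ carries the cone field descended from $\widetilde M$, and $p$ is a causal covering if $M$ is totally acausal. $T$ is dominant if for all $a,b\in\widetilde M$ there is $n\in\mathbb{N}$ with $T^na\succ b$. An action of a group $G$ on a set $X$ is almost $2$-transitive if there is a $G$-orbit $X^{(2)}\subset X\times X$ such that for all $x,y\in X$ there exists $z\in X$ with $(x,z)\in X^{(2)}$ and $(z,y)\in X^{(2)}$. *)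

theory Defs
  imports "HOL-Analysis.Analysis"
begin

text \<open>C-infinity in the sense: Frechet differentiable at every point of S, and
  every directional derivative is again C-infinity (greatest fixed point).\<close>
coinductive smooth_on :: "'a::real_normed_vector set \<Rightarrow> ('a \<Rightarrow> 'b::real_normed_vector) \<Rightarrow> bool"
  for S :: "'a set" where
  "\<lbrakk> \<forall>x\<in>S. f differentiable (at x);
     \<forall>v. smooth_on S (\<lambda>x. frechet_derivative f (at x) v) \<rbrakk> \<Longrightarrow> smooth_on S f"

type_synonym ('p, 'e) chart = "'p set \<times> ('p \<Rightarrow> 'e)"

definition is_chart :: "'p topology \<Rightarrow> ('p, 'e::euclidean_space) chart \<Rightarrow> bool" where
  "is_chart X c \<longleftrightarrow> (case c of (U, \<phi>) \<Rightarrow>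
      openin X U \<and> inj_on \<phi> U \<and> open (\<phi> ` U) \<and>
      continuous_map (subtopology X U) euclidean \<phi> \<and>
      continuous_map (subtopology euclidean (\<phi> ` U)) X (inv_into U \<phi>))"

definition smooth_atlas :: "'p topology \<Rightarrow> ('p, 'e::euclidean_space) chart set \<Rightarrow> bool" where
  "smooth_atlas X A \<longleftrightarrow>
     (\<forall>c\<in>A. is_chart X c) \<and> \<Union> (fst ` A) = topspace X \<and>
     (\<forall>(U, \<phi>)\<in>A. \<forall>(V, \<psi>)\<in>A. smooth_on (\<phi> ` (U \<inter> V)) (\<psi> \<circ> inv_into U \<phi>))"

definition smooth_manifold :: "'p topology \<Rightarrow> ('p, 'e::euclidean_space) chart set \<Rightarrow> bool" where
  "smooth_manifold X A \<longleftrightarrow> Hausdorff_space X \<and> second_countable X \<and> smooth_atlas X A"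

definition smooth_map :: "'p topology \<Rightarrow> ('p, 'e::euclidean_space) chart set \<Rightarrow> ('p \<Rightarrow> 'p) \<Rightarrow> bool" where
  "smooth_map X A f \<longleftrightarrow> continuous_map X X f \<and>
     (\<forall>(U, \<phi>)\<in>A. \<forall>(V, \<psi>)\<in>A. smooth_on (\<phi> ` (U \<inter> f -` V)) (\<psi> \<circ> f \<circ> inv_into U \<phi>))"

definition diffeo :: "'p topology \<Rightarrow> ('p, 'e::euclidean_space) chart set \<Rightarrow> ('p \<Rightarrow> 'p) \<Rightarrow> bool" where
  "diffeo X A f \<longleftrightarrow> bij_betw f (topspace X) (topspace X) \<and> smooth_map X A f \<and>
     smooth_map X A (inv_into (topspace X) f)"

text \<open>A cone field assigns to each point x and each chart (U,phi) containing x
  the cone C_x expressed in the coordinates of that chart (a subset of the model space).\<close>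
type_synonym ('p, 'e) cone_field = "'p \<Rightarrow> ('p, 'e) chart \<Rightarrow> 'e set"

definition pointed_regular_closed_convex_cone :: "'e::euclidean_space set \<Rightarrow> bool" where
  "pointed_regular_closed_convex_cone C \<longleftrightarrow>
     closed C \<and> convex C \<and> cone C \<and> C \<noteq> {} \<and> C \<inter> uminus ` C = {0} \<and> interior C \<noteq> {}"

definition cone_field :: "'p topology \<Rightarrow> ('p, 'e::euclidean_space) chart set \<Rightarrow> ('p, 'e) cone_field \<Rightarrow> bool" where
  "cone_field X A Cf \<longleftrightarrow>
     \<comment> \<open>each C_x is a closed pointed regular convex cone\<close>
     (\<forall>(U, \<phi>)\<in>A. \<forall>x\<in>U. pointed_regular_closed_convex_cone (Cf x (U, \<phi>))) \<and>
     \<comment> \<open>coordinate expressions are related by the differential of the chart change\<close>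
     (\<forall>(U, \<phi>)\<in>A. \<forall>(V, \<psi>)\<in>A. \<forall>x\<in>U \<inter> V.
        Cf x (V, \<psi>) = frechet_derivative (\<psi> \<circ> inv_into U \<phi>) (at (\<phi> x)) ` Cf x (U, \<phi>)) \<and>
     \<comment> \<open>smooth variation: locally C_y = g(y) C_0 for a smooth field g of linear isomorphisms\<close>
     (\<forall>x\<in>topspace X. \<exists>U \<phi> W C0 g. (U, \<phi>) \<in> A \<and> openin X W \<and> x \<in> W \<and> W \<subseteq> U \<and>
        smooth_on (\<phi> ` W) (g :: 'e \<Rightarrow> ('e \<Rightarrow>\<^sub>L 'e)) \<and>
        (\<forall>y\<in>W. bij (blinfun_apply (g (\<phi> y))) \<and> Cf y (U, \<phi>) = blinfun_apply (g (\<phi> y)) ` C0))"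

definition conal_manifold :: "'p topology \<Rightarrow> ('p, 'e::euclidean_space) chart set \<Rightarrow> ('p, 'e) cone_field \<Rightarrow> bool" where
  "conal_manifold X A Cf \<longleftrightarrow> smooth_manifold X A \<and> cone_field X A Cf"

definition smooth_piece :: "'p topology \<Rightarrow> ('p, 'e::euclidean_space) chart set \<Rightarrow> (real \<Rightarrow> 'p) \<Rightarrow> real \<Rightarrow> real \<Rightarrow> bool" where
  "smooth_piece X A \<gamma> s t \<longleftrightarrow>
     (\<forall>\<tau>\<in>{s..t}. \<forall>(U, \<phi>)\<in>A. \<gamma> \<tau> \<in> U \<longrightarrow>
        (\<exists>e>0. \<exists>h. smooth_on (ball \<tau> e) (h :: real \<Rightarrow> 'e) \<and>
           (\<forall>r\<in>ball \<tau> e \<inter> {s..t}. \<gamma> r \<in> U \<and> \<phi> (\<gamma> r) = h r)))"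

definition piecewise_smooth_curve :: "'p topology \<Rightarrow> ('p, 'e::euclidean_space) chart set \<Rightarrow> (real \<Rightarrow> 'p) \<Rightarrow> real \<Rightarrow> real \<Rightarrow> bool" where
  "piecewise_smooth_curve X A \<gamma> a b \<longleftrightarrow> a \<le> b \<and>
     continuous_map (subtopology euclidean {a..b}) X \<gamma> \<and>
     (\<exists>P. finite P \<and> a \<in> P \<and> b \<in> P \<and> P \<subseteq> {a..b} \<and>
        (\<forall>s\<in>P. \<forall>t\<in>P. s < t \<and> {s<..<t} \<inter> P = {} \<longrightarrow> smooth_piece X A \<gamma> s t))"

definition causal_curve :: "'p topology \<Rightarrow> ('p, 'e::euclidean_space) chart set \<Rightarrow> ('p, 'e) cone_field \<Rightarrow> (real \<Rightarrow> 'p) \<Rightarrow> real \<Rightarrow> real \<Rightarrow> bool" where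
  "causal_curve X A Cf \<gamma> a b \<longleftrightarrow> piecewise_smooth_curve X A \<gamma> a b \<and>
     (\<exists>F. finite F \<and> (\<forall>t\<in>{a..b} - F. \<forall>(U, \<phi>)\<in>A. \<gamma> t \<in> U \<longrightarrow>
        (\<exists>v. ((\<phi> \<circ> \<gamma>) has_vector_derivative v) (at t within {a..b}) \<and> v \<in> Cf (\<gamma> t) (U, \<phi>))))"

definition causal_s :: "'p topology \<Rightarrow> ('p, 'e::euclidean_space) chart set \<Rightarrow> ('p, 'e) cone_field \<Rightarrow> ('p \<times> 'p) set" where
  "causal_s X A Cf = {(x, y). \<exists>\<gamma> a b. causal_curve X A Cf \<gamma> a b \<and> \<gamma> a = x \<and> \<gamma> b = y}"

definition causal_rel :: "'p topology \<Rightarrow> ('p, 'e::euclidean_space) chart set \<Rightarrow> ('p, 'e) cone_field \<Rightarrow> ('p \<times> 'p) set" where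
  "causal_rel X A Cf = (prod_topology X X) closure_of (causal_s X A Cf)"

definition causal_manifold :: "'p topology \<Rightarrow> ('p, 'e::euclidean_space) chart set \<Rightarrow> ('p, 'e) cone_field \<Rightarrow> bool" where
  "causal_manifold X A Cf \<longleftrightarrow> conal_manifold X A Cf \<and> partial_order_on (topspace X) (causal_rel X A Cf)"

definition totally_acausal :: "'p topology \<Rightarrow> ('p, 'e::euclidean_space) chart set \<Rightarrow> ('p, 'e) cone_field \<Rightarrow> bool" where
  "totally_acausal X A Cf \<longleftrightarrow> causal_rel X A Cf = topspace X \<times> topspace X"

definition cone_group :: "'p topology \<Rightarrow> ('p, 'e::euclidean_space) chart set \<Rightarrow> ('p, 'e) cone_field \<Rightarrow> ('p \<Rightarrow> 'p) set" where
  "cone_group X A Cf = {f. diffeo X A f \<and>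
     (\<forall>(U, \<phi>)\<in>A. \<forall>(V, \<psi>)\<in>A. \<forall>x\<in>U. f x \<in> V \<longrightarrow>
        frechet_derivative (\<psi> \<circ> f \<circ> inv_into U \<phi>) (at (\<phi> x)) ` Cf x (U, \<phi>) = Cf (f x) (V, \<psi>))}"

definition Tpow :: "'p topology \<Rightarrow> ('p \<Rightarrow> 'p) \<Rightarrow> int \<Rightarrow> 'p \<Rightarrow> 'p" where
  "Tpow X T k = (if 0 \<le> k then T ^^ nat k else (inv_into (topspace X) T) ^^ nat (- k))"

definition properly_discontinuous_Z :: "'p topology \<Rightarrow> ('p \<Rightarrow> 'p) \<Rightarrow> bool" where
  "properly_discontinuous_Z X T \<longleftrightarrow>
     (\<forall>x\<in>topspace X. \<exists>U. openin X U \<and> x \<in> U \<and>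
        (\<forall>k::int. k \<noteq> 0 \<longrightarrow> Tpow X T k ` U \<inter> U = {}))"

definition infinite_cyclic_gen :: "'p topology \<Rightarrow> ('p \<Rightarrow> 'p) \<Rightarrow> bool" where
  "infinite_cyclic_gen X T \<longleftrightarrow>
     (\<forall>k::int. k \<noteq> 0 \<longrightarrow> (\<exists>x\<in>topspace X. Tpow X T k x \<noteq> x))"

text \<open>The projection p: a point goes to its Gamma-orbit; M = Gamma\textbackslash M~ is the set of orbits.\<close>
definition orb :: "'p topology \<Rightarrow> ('p \<Rightarrow> 'p) \<Rightarrow> 'p \<Rightarrow> 'p set" where
  "orb X T a = range (\<lambda>k. Tpow X T k a)"

definition quot_space :: "'p topology \<Rightarrow> ('p \<Rightarrow> 'p) \<Rightarrow> 'p set set" where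
  "quot_space X T = orb X T ` topspace X"

definition quot_top :: "'p topology \<Rightarrow> ('p \<Rightarrow> 'p) \<Rightarrow> 'p set topology" where
  "quot_top X T = topology (\<lambda>Q. Q \<subseteq> quot_space X T \<and> openin X (\<Union> Q))"

definition quot_atlas :: "'p topology \<Rightarrow> ('p, 'e::euclidean_space) chart set \<Rightarrow> ('p \<Rightarrow> 'p) \<Rightarrow> ('p set, 'e) chart set" where
  "quot_atlas X A T = {(orb X T ` W, \<lambda>Q. \<phi> (the_elem (Q \<inter> W))) | U \<phi> W.
      (U, \<phi>) \<in> A \<and> openin X W \<and> W \<subseteq> U \<and> inj_on (orb X T) W}"

definition quot_cone_field :: "'p topology \<Rightarrow> ('p, 'e::euclidean_space) chart set \<Rightarrow> ('p, 'e) cone_field \<Rightarrow> ('p \<Rightarrow> 'p) \<Rightarrow> ('p set, 'e) cone_field" where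
  "quot_cone_field X A Cf T Q c = (SOME C. \<exists>U \<phi> W a.
      (U, \<phi>) \<in> A \<and> openin X W \<and> W \<subseteq> U \<and> inj_on (orb X T) W \<and>
      c = (orb X T ` W, \<lambda>Q'. \<phi> (the_elem (Q' \<inter> W))) \<and> a \<in> W \<and> a \<in> Q \<and> C = Cf a (U, \<phi>))"

definition causal_covering :: "'p topology \<Rightarrow> ('p, 'e::euclidean_space) chart set \<Rightarrow> ('p, 'e) cone_field \<Rightarrow> ('p \<Rightarrow> 'p) \<Rightarrow> bool" where
  "causal_covering X A Cf T \<longleftrightarrow>
     totally_acausal (quot_top X T) (quot_atlas X A T) (quot_cone_field X A Cf T)"

definition dominant :: "'p topology \<Rightarrow> ('p, 'e::euclidean_space) chart set \<Rightarrow> ('p, 'e) cone_field \<Rightarrow> ('p \<Rightarrow> 'p) \<Rightarrow> bool" where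
  "dominant X A Cf T \<longleftrightarrow> (\<forall>a\<in>topspace X. \<forall>b\<in>topspace X. \<exists>n::nat.
      (b, (T ^^ n) a) \<in> causal_rel X A Cf \<and> (T ^^ n) a \<noteq> b)"

definition centralizer :: "'p topology \<Rightarrow> ('p, 'e::euclidean_space) chart set \<Rightarrow> ('p, 'e) cone_field \<Rightarrow> ('p \<Rightarrow> 'p) \<Rightarrow> ('p \<Rightarrow> 'p) set" where
  "centralizer X A Cf T = {g \<in> cone_group X A Cf. \<forall>x\<in>topspace X. g (T x) = T (g x)}"

text \<open>G = centralizer / Gamma acts on M by g.p(x) = p(g x). An orbit of G on M \<times> M is the
  orbit of some pair (p a0, p c0).\<close>
definition almost_2_transitive_quot :: "'p topology \<Rightarrow> ('p, 'e::euclidean_space) chart set \<Rightarrow> ('p, 'e) cone_field \<Rightarrow> ('p \<Rightarrow> 'p) \<Rightarrow> bool" where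
  "almost_2_transitive_quot X A Cf T \<longleftrightarrow>
     (\<exists>a0\<in>topspace X. \<exists>c0\<in>topspace X.
        let X2 = {(orb X T (g a0), orb X T (g c0)) | g. g \<in> centralizer X A Cf T} in
        \<forall>x\<in>quot_space X T. \<forall>y\<in>quot_space X T. \<exists>z\<in>quot_space X T. (x, z) \<in> X2 \<and> (z, y) \<in> X2)"

definition quasi_total :: "'p topology \<Rightarrow> ('p, 'e::euclidean_space) chart set \<Rightarrow> ('p, 'e) cone_field \<Rightarrow> ('p \<Rightarrow> 'p) \<Rightarrow> bool" where
  "quasi_total X A Cf T \<longleftrightarrow> (\<exists>N::nat. \<forall>a\<in>topspace X. \<forall>b\<in>topspace X. \<exists>k\<le>N.
      (a, (T ^^ k) b) \<in> causal_rel X A Cf \<or> (b, (T ^^ k) a) \<in> causal_rel X A Cf)"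

end

theory Submission
  imports Defs
begin

lemma smooth_onD1: "smooth_on S f \<Longrightarrow> x \<in> S \<Longrightarrow> f differentiable (at x)"
  by (erule smooth_on.cases) auto

lemma smooth_onD2: "smooth_on S f \<Longrightarrow> smooth_on S (\<lambda>x. frechet_derivative f (at x) v)"
  by (erule smooth_on.cases) auto

lemma smooth_on_subset:
  assumes "smooth_on S f" "T \<subseteq> S" shows "smooth_on T f"
proof -
  have "\<exists>S. smooth_on S f \<and> T \<subseteq> S" using assms by blast
  then show ?thesis
  proof (coinduction arbitrary: f rule: smooth_on.coinduct)
    case (smooth_on f)
    then obtain S where "smooth_on S f" "T \<subseteq> S" by blast
    then show ?case using smooth_onD1 smooth_onD2 by blast
  qed
qed

lemma diff_transfer:
  assumes "open S" "x \<in> S" "\<forall>y\<in>S. f y = g y" "g differentiable (at x)"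
  shows "f differentiable (at x)" "frechet_derivative f (at x) = frechet_derivative g (at x)"
proof -
  have g: "(g has_derivative frechet_derivative g (at x)) (at x)"
    using assms(4) frechet_derivative_works by blast
  have "(f has_derivative frechet_derivative g (at x)) (at x)"
    by (rule has_derivative_transform_within_open[OF g assms(1,2)]) (use assms(3) in auto)
  then show "f differentiable (at x)" "frechet_derivative f (at x) = frechet_derivative g (at x)"
    using differentiableI frechet_derivative_at by metis+
qed

lemma smooth_on_cong:
  assumes "smooth_on S g" "open S" "\<forall>x\<in>S. f x = g x" shows "smooth_on S f"
proof -
  have "\<exists>g. smooth_on S g \<and> (\<forall>x\<in>S. f x = g x)" using assms by blast
  then show ?thesis
  proof (coinduction arbitrary: f rule: smooth_on.coinduct)
    case (smooth_on f)
    then obtain g where g: "smooth_on S g" "\<forall>x\<in>S. f x = g x" by blast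
    have d: "\<forall>x\<in>S. f differentiable at x" using diff_transfer(1)[OF assms(2) _ g(2)] smooth_onD1[OF g(1)] by blast
    have "\<forall>v. smooth_on S (\<lambda>x. frechet_derivative g (at x) v) \<and>
        (\<forall>x\<in>S. frechet_derivative f (at x) v = frechet_derivative g (at x) v)"
      using diff_transfer(2)[OF assms(2) _ g(2)] smooth_onD1[OF g(1)] smooth_onD2[OF g(1)] by metis
    then show ?case using d by blast
  qed
qed

lemma smooth_on_linear0:
  assumes "open S" "bounded_linear L" "\<exists>u. smooth_on S u \<and> (\<forall>x\<in>S. f x = L (u x))"
  shows "smooth_on S f"
  using assms(3)
proof (coinduction arbitrary: f rule: smooth_on.coinduct)
    case (smooth_on f)
    then obtain u where u: "smooth_on S u" "\<forall>x\<in>S. f x = L (u x)" by blast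
    have hd: "\<And>x. x \<in> S \<Longrightarrow> ((\<lambda>x. L (u x)) has_derivative (\<lambda>v. L (frechet_derivative u (at x) v))) (at x)"
    proof -
      fix x assume "x \<in> S"
      then have "(u has_derivative frechet_derivative u (at x)) (at x)"
        using smooth_onD1[OF u(1)] frechet_derivative_works by blast
      then show "((\<lambda>x. L (u x)) has_derivative (\<lambda>v. L (frechet_derivative u (at x) v))) (at x)"
        using bounded_linear.has_derivative[OF assms(2)] by blast
    qed
    have d: "\<forall>x\<in>S. f differentiable at x"
      using diff_transfer(1)[OF assms(1) _ u(2)] hd differentiableI by blast
    have e: "\<forall>x\<in>S. frechet_derivative f (at x) v = L (frechet_derivative u (at x) v)" for v
      using diff_transfer(2)[OF assms(1) _ u(2)] hd differentiableI frechet_derivative_at by metis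
    show ?case using d e smooth_onD2[OF u(1)] by blast
qed

lemma smooth_on_linear:
  assumes "smooth_on S u" "open S" "bounded_linear L" shows "smooth_on S (\<lambda>x. L (u x))"
  by (rule smooth_on_linear0[OF assms(2,3)]) (use assms(1) in blast)

inductive Cl :: "'a::real_normed_vector set \<Rightarrow> 'e::euclidean_space itself \<Rightarrow> ('a \<Rightarrow> 'c::real_normed_vector) \<Rightarrow> bool"
  for S TY where
  base: "smooth_on S f \<Longrightarrow> Cl S TY f"
| add: "Cl S TY f \<Longrightarrow> Cl S TY g \<Longrightarrow> Cl S TY (\<lambda>x. f x + g x)"
| scale: "smooth_on S (a::'a\<Rightarrow>real) \<Longrightarrow> Cl S TY f \<Longrightarrow> Cl S TY (\<lambda>x. a x *\<^sub>R f x)"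
| comp: "smooth_on S' (F::'e \<Rightarrow> 'c) \<Longrightarrow> open S' \<Longrightarrow> smooth_on S (h::'a\<Rightarrow>'e) \<Longrightarrow> h ` S \<subseteq> S' \<Longrightarrow> Cl S TY (F \<circ> h)"
| cong: "Cl S TY g \<Longrightarrow> \<forall>x\<in>S. f x = g x \<Longrightarrow> Cl S TY f"

lemma Cl_sum:
  assumes "finite I" "I \<noteq> {}" "\<forall>i\<in>I. Cl S TY (f i)"
  shows "Cl S TY (\<lambda>x. \<Sum>i\<in>I. f i x)"
  using assms
proof (induction I rule: finite_ne_induct)
  case (singleton x)
  then show ?case by simp
next
  case (insert x F)
  then have "Cl S TY (\<lambda>xa. f x xa + (\<Sum>i\<in>F. f i xa))"
    using Cl.add[of S TY "f x" "\<lambda>xa. \<Sum>i\<in>F. f i xa"] by blast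
  then show ?case using insert.hyps by simp
qed

lemma fd_eq:
  assumes "\<And>x. x \<in> S \<Longrightarrow> (f has_derivative D x) (at x)"
  shows "\<forall>x\<in>S. frechet_derivative f (at x) v = D x v"
proof
  fix x assume "x \<in> S"
  from frechet_derivative_at[OF assms[OF this]] show "frechet_derivative f (at x) v = D x v" by simp
qed

lemma fd_works: "f differentiable (at x) \<Longrightarrow> (f has_derivative frechet_derivative f (at x)) (at x)"
  using frechet_derivative_works by blast

lemma Cl_step:
  fixes f :: "'a::real_normed_vector \<Rightarrow> 'c::real_normed_vector" and TY :: "'e::euclidean_space itself"
  assumes "Cl S TY f" "open S"
  shows "(\<forall>x\<in>S. f differentiable at x) \<and> (\<forall>v. Cl S TY (\<lambda>x. frechet_derivative f (at x) v))"
  using assms(1)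
proof (induction rule: Cl.induct)
  case (base f)
  then show ?case using smooth_onD1 smooth_onD2 Cl.base by metis
next
  case (add f g)
  have hd: "((\<lambda>x. f x + g x) has_derivative
      (\<lambda>v. frechet_derivative f (at x) v + frechet_derivative g (at x) v)) (at x)" if "x \<in> S" for x
    by (rule has_derivative_add[OF fd_works fd_works]) (use add.IH that in auto)
  have e: "\<forall>x\<in>S. frechet_derivative (\<lambda>x. f x + g x) (at x) v =
      frechet_derivative f (at x) v + frechet_derivative g (at x) v" for v
    by (rule fd_eq[OF hd])
  have c: "Cl S TY (\<lambda>x. frechet_derivative f (at x) v + frechet_derivative g (at x) v)" for v
    by (rule Cl.add) (use add.IH in auto)
  have d: "\<forall>x\<in>S. (\<lambda>x. f x + g x) differentiable at x" using hd differentiableI by blast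
  show ?case using d Cl.cong[OF c e] by blast
next
  case (scale a f)
  have hd: "((\<lambda>x. a x *\<^sub>R f x) has_derivative
      (\<lambda>v. a x *\<^sub>R frechet_derivative f (at x) v + frechet_derivative a (at x) v *\<^sub>R f x)) (at x)" if "x \<in> S" for x
    by (rule has_derivative_scaleR[OF fd_works fd_works]) (use scale.IH smooth_onD1[OF scale.hyps(1)] that in auto)
  have e: "\<forall>x\<in>S. frechet_derivative (\<lambda>x. a x *\<^sub>R f x) (at x) v =
      a x *\<^sub>R frechet_derivative f (at x) v + frechet_derivative a (at x) v *\<^sub>R f x" for v
    by (rule fd_eq[OF hd])
  have c: "Cl S TY (\<lambda>x. a x *\<^sub>R frechet_derivative f (at x) v + frechet_derivative a (at x) v *\<^sub>R f x)" for v
    by (rule Cl.add[OF Cl.scale[OF scale.hyps(1)] Cl.scale[OF smooth_onD2[OF scale.hyps(1)] scale.hyps(2)]])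
      (use scale.IH in auto)
  have d: "\<forall>x\<in>S. (\<lambda>x. a x *\<^sub>R f x) differentiable at x" using hd differentiableI by blast
  show ?case using d Cl.cong[OF c e] by blast
next
  case (comp S' F h)
  have hd: "(F \<circ> h has_derivative
      (\<lambda>v. frechet_derivative F (at (h x)) (frechet_derivative h (at x) v))) (at x)" if x: "x \<in> S" for x
  proof -
    have "(h has_derivative frechet_derivative h (at x)) (at x)"
      using smooth_onD1[OF comp.hyps(3) x] fd_works by blast
    moreover have "(F has_derivative frechet_derivative F (at (h x))) (at (h x))"
      using smooth_onD1[OF comp.hyps(1)] comp.hyps(4) x fd_works by blast
    ultimately have "(F \<circ> h has_derivative (frechet_derivative F (at (h x)) \<circ> frechet_derivative h (at x))) (at x)"
      by (rule diff_chain_at)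
    then show ?thesis by (simp add: o_def)
  qed
  have lin: "linear (frechet_derivative F (at (h x)))" if "x \<in> S" for x
    using smooth_onD1[OF comp.hyps(1)] comp.hyps(4) fd_works has_derivative_linear that by blast
  have e0: "\<forall>x\<in>S. frechet_derivative (F \<circ> h) (at x) v = frechet_derivative F (at (h x)) (frechet_derivative h (at x) v)" for v
    by (rule fd_eq[OF hd])
  have e: "\<forall>x\<in>S. frechet_derivative (F \<circ> h) (at x) v =
      (\<Sum>i\<in>Basis. (frechet_derivative h (at x) v \<bullet> i) *\<^sub>R ((\<lambda>y. frechet_derivative F (at y) i) \<circ> h) x)" for v
  proof
    fix x assume x: "x \<in> S"
    have "frechet_derivative (F \<circ> h) (at x) v = frechet_derivative F (at (h x)) (frechet_derivative h (at x) v)"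
      using e0 x by blast
    also have "\<dots> = frechet_derivative F (at (h x)) (\<Sum>i\<in>Basis. (frechet_derivative h (at x) v \<bullet> i) *\<^sub>R i)"
      by (simp only: euclidean_representation)
    also have "\<dots> = (\<Sum>i\<in>Basis. (frechet_derivative h (at x) v \<bullet> i) *\<^sub>R frechet_derivative F (at (h x)) i)"
      using lin[OF x] by (simp add: linear_sum linear_scale)
    finally show "frechet_derivative (F \<circ> h) (at x) v =
      (\<Sum>i\<in>Basis. (frechet_derivative h (at x) v \<bullet> i) *\<^sub>R ((\<lambda>y. frechet_derivative F (at y) i) \<circ> h) x)" by simp
  qed
  have c: "Cl S TY (\<lambda>x. \<Sum>i\<in>Basis. (frechet_derivative h (at x) v \<bullet> i) *\<^sub>R ((\<lambda>y. frechet_derivative F (at y) i) \<circ> h) x)" for v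
  proof (rule Cl_sum[OF finite_Basis])
    show "Basis \<noteq> {}" by simp
    show "\<forall>i\<in>Basis. Cl S TY (\<lambda>x. (frechet_derivative h (at x) v \<bullet> i) *\<^sub>R ((\<lambda>y. frechet_derivative F (at y) i) \<circ> h) x)"
    proof
      fix i :: 'e assume "i \<in> Basis"
      have sa: "smooth_on S (\<lambda>x. frechet_derivative h (at x) v \<bullet> i)"
        by (rule smooth_on_linear[OF smooth_onD2[OF comp.hyps(3)] assms(2)]) (rule bounded_linear_inner_left)
      show "Cl S TY (\<lambda>x. (frechet_derivative h (at x) v \<bullet> i) *\<^sub>R ((\<lambda>y. frechet_derivative F (at y) i) \<circ> h) x)"
        by (rule Cl.scale[OF sa Cl.comp[OF smooth_onD2[OF comp.hyps(1)] comp.hyps(2,3,4)]])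
    qed
  qed
  have d: "\<forall>x\<in>S. (F \<circ> h) differentiable at x" using hd differentiableI by blast
  show ?case using d Cl.cong[OF c e] by blast
next
  case (cong g f)
  have d: "\<forall>x\<in>S. f differentiable at x"
    using cong.IH cong.hyps(2) diff_transfer(1)[OF assms(2), of _ f g] by blast
  have e: "\<forall>x\<in>S. frechet_derivative f (at x) v = frechet_derivative g (at x) v" for v
    using cong.IH cong.hyps(2) diff_transfer(2)[OF assms(2), of _ f g] by auto
  show ?case using d Cl.cong[OF _ e] cong.IH by blast
qed

lemma Cl_smooth:
  assumes "open S" "Cl S TY f" shows "smooth_on S f"
  using assms(2)
proof (coinduction arbitrary: f rule: smooth_on.coinduct)
  case (smooth_on f)
  then show ?case using Cl_step[OF _ assms(1)] by blast
qed

lemma smooth_on_compose: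
  fixes F :: "'e::euclidean_space \<Rightarrow> 'c::real_normed_vector" and h :: "'a::real_normed_vector \<Rightarrow> 'e"
  assumes "smooth_on S' F" "open S'" "smooth_on S h" "h ` S \<subseteq> S'" "open S"
  shows "smooth_on S (F \<circ> h)"
  by (rule Cl_smooth[OF assms(5) Cl.comp[OF assms(1-4), where TY="TYPE('e)"]])

definition cone_pres :: "'p topology \<Rightarrow> ('p, 'e::euclidean_space) chart set \<Rightarrow> ('p, 'e) cone_field \<Rightarrow> ('p \<Rightarrow> 'p) \<Rightarrow> bool" where
  "cone_pres X A Cf f \<longleftrightarrow> (\<forall>(U, \<phi>)\<in>A. \<forall>(V, \<psi>)\<in>A. \<forall>x\<in>U. f x \<in> V \<longrightarrow>
        frechet_derivative (\<psi> \<circ> f \<circ> inv_into U \<phi>) (at (\<phi> x)) ` Cf x (U, \<phi>) = Cf (f x) (V, \<psi>))"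

lemma chart_open_image:
  assumes "is_chart X (U, \<phi>)" "openin X W" "W \<subseteq> U"
  shows "open (\<phi> ` W)"
proof -
  have c: "continuous_map (subtopology euclidean (\<phi> ` U)) X (inv_into U \<phi>)"
    and o: "open (\<phi> ` U)" and i: "inj_on \<phi> U"
    using assms(1) by (auto simp: is_chart_def)
  have "openin (subtopology euclidean (\<phi> ` U)) {z \<in> topspace (subtopology euclidean (\<phi> ` U)). inv_into U \<phi> z \<in> W}"
    by (rule openin_continuous_map_preimage[OF c assms(2)])
  moreover have "{z \<in> topspace (subtopology euclidean (\<phi> ` U)). inv_into U \<phi> z \<in> W} = \<phi> ` W"
    using assms(3) i by (auto simp: inv_into_f_f)
  ultimately show ?thesis using o openin_open_trans by metis
qed

lemma atlas_facts:
  assumes "smooth_atlas X A" "(U, \<phi>) \<in> A"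
  shows "is_chart X (U, \<phi>)" "openin X U" "U \<subseteq> topspace X" "inj_on \<phi> U"
proof -
  show 1: "is_chart X (U, \<phi>)" using assms by (auto simp: smooth_atlas_def)
  show 2: "openin X U" using 1 by (simp add: is_chart_def)
  show "U \<subseteq> topspace X" using openin_subset[OF 2] .
  show "inj_on \<phi> U" using 1 by (simp add: is_chart_def)
qed

lemma atlas_cover:
  assumes "smooth_atlas X A" "p \<in> topspace X"
  obtains U \<phi> where "(U, \<phi>) \<in> A" "p \<in> U"
proof -
  have "p \<in> \<Union> (fst ` A)" using assms unfolding smooth_atlas_def by blast
  then obtain c where c: "c \<in> A" "p \<in> fst c" by blast
  show ?thesis by (rule that[of "fst c" "snd c"]) (use c in auto)
qed

lemma pre_open:
  assumes "smooth_atlas X A" "(U, \<phi>) \<in> A" "continuous_map X X f" "openin X V"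
  shows "openin X (U \<inter> f -` V)" "open (\<phi> ` (U \<inter> f -` V))"
proof -
  have "openin X {x \<in> topspace X. f x \<in> V}" by (rule openin_continuous_map_preimage[OF assms(3,4)])
  moreover have "U \<inter> f -` V = U \<inter> {x \<in> topspace X. f x \<in> V}" using atlas_facts(3)[OF assms(1,2)] by auto
  ultimately show "openin X (U \<inter> f -` V)" using atlas_facts(2)[OF assms(1,2)] by auto
  then show "open (\<phi> ` (U \<inter> f -` V))" using chart_open_image atlas_facts(1)[OF assms(1,2)] by blast
qed

lemma smooth_piece_comp:
  assumes atl: "smooth_atlas X A" and sm: "smooth_map X A f"
    and cg: "continuous_map (subtopology euclidean {a..b}) X \<gamma>" and st: "{s..t} \<subseteq> {a..b}"
    and sp: "smooth_piece X A \<gamma> s t"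
  shows "smooth_piece X A (f \<circ> \<gamma>) s t"
  unfolding smooth_piece_def
proof (intro ballI, clarify)
  fix \<tau> V \<psi> assume \<tau>: "\<tau> \<in> {s..t}" and V: "(V, \<psi>) \<in> A" and fV: "(f \<circ> \<gamma>) \<tau> \<in> V"
  have cf: "continuous_map X X f" using sm by (simp add: smooth_map_def)
  have "\<tau> \<in> topspace (subtopology euclidean {a..b})" using \<tau> st by auto
  then have "\<gamma> \<tau> \<in> topspace X" using continuous_map_image_subset_topspace[OF cg] by blast
  then obtain U \<phi> where U: "(U, \<phi>) \<in> A" "\<gamma> \<tau> \<in> U" using atlas_cover[OF atl] by blast
  have sp1: "\<forall>(U, \<phi>)\<in>A. \<gamma> \<tau> \<in> U \<longrightarrow>
        (\<exists>e>0. \<exists>h. smooth_on (ball \<tau> e) h \<and> (\<forall>r\<in>ball \<tau> e \<inter> {s..t}. \<gamma> r \<in> U \<and> \<phi> (\<gamma> r) = h r))"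
    using bspec[OF sp[unfolded smooth_piece_def] \<tau>] .
  have "\<exists>e>0. \<exists>h. smooth_on (ball \<tau> e) h \<and> (\<forall>r\<in>ball \<tau> e \<inter> {s..t}. \<gamma> r \<in> U \<and> \<phi> (\<gamma> r) = h r)"
    using bspec[OF sp1 U(1)] U(2) by simp
  then obtain e h where e: "e > 0" and hs: "smooth_on (ball \<tau> e) h"
    and hr: "\<forall>r\<in>ball \<tau> e \<inter> {s..t}. \<gamma> r \<in> U \<and> \<phi> (\<gamma> r) = h r"
    by blast
  define Oset where "Oset = \<phi> ` (U \<inter> f -` V)"
  have oO: "open Oset" unfolding Oset_def by (rule pre_open(2)[OF atl U(1) cf atlas_facts(2)[OF atl V]])
  have g1: "\<gamma> \<tau> \<in> U \<inter> f -` V" using U fV by auto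
  have g2: "h \<tau> = \<phi> (\<gamma> \<tau>)" using hr \<tau> e by auto
  have hO: "h \<tau> \<in> Oset" unfolding Oset_def g2 using g1 by (rule imageI)
  have "h differentiable at \<tau>" using smooth_onD1[OF hs] e by simp
  then have ic: "isCont h \<tau>" by (rule differentiable_imp_continuous_within)
  have "\<exists>\<epsilon>>0. ball (h \<tau>) \<epsilon> \<subseteq> Oset" using oO hO open_contains_ball by blast
  then obtain \<epsilon> where "\<epsilon> > 0" "ball (h \<tau>) \<epsilon> \<subseteq> Oset" by blast
  have "\<exists>d>0. \<forall>r. dist r \<tau> < d \<longrightarrow> dist (h r) (h \<tau>) < \<epsilon>"
    using ic \<open>\<epsilon> > 0\<close> unfolding continuous_at_eps_delta by blast
  then obtain d where d0: "d > 0" "\<forall>r. dist r \<tau> < d \<longrightarrow> dist (h r) (h \<tau>) < \<epsilon>" by blast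
  have d: "d > 0" "\<forall>r. dist r \<tau> < d \<longrightarrow> h r \<in> Oset"
  proof -
    show "d > 0" by fact
    show "\<forall>r. dist r \<tau> < d \<longrightarrow> h r \<in> Oset"
    proof (intro allI impI)
      fix r assume "dist r \<tau> < d"
      then have "dist (h r) (h \<tau>) < \<epsilon>" using d0 by blast
      then have "h r \<in> ball (h \<tau>) \<epsilon>" by (simp add: dist_commute)
      then show "h r \<in> Oset" using \<open>ball (h \<tau>) \<epsilon> \<subseteq> Oset\<close> by blast
    qed
  qed
  define e' where "e' = min e d"
  have e': "e' > 0" using e d by (simp add: e'_def)
  have hs': "smooth_on (ball \<tau> e') h" by (rule smooth_on_subset[OF hs]) (simp add: e'_def subset_ball)
  have hO': "h ` ball \<tau> e' \<subseteq> Oset"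
  proof
    fix y assume "y \<in> h ` ball \<tau> e'"
    then obtain r where r: "r \<in> ball \<tau> e'" "y = h r" by blast
    then have "dist r \<tau> < d" by (simp add: e'_def dist_commute)
    then show "y \<in> Oset" using d(2) r(2) by blast
  qed
  define G where "G = \<psi> \<circ> f \<circ> inv_into U \<phi>"
  have sm1: "\<forall>(U, \<phi>)\<in>A. \<forall>(V, \<psi>)\<in>A. smooth_on (\<phi> ` (U \<inter> f -` V)) (\<psi> \<circ> f \<circ> inv_into U \<phi>)"
    using sm unfolding smooth_map_def by blast
  have sm2: "\<forall>(V, \<psi>)\<in>A. smooth_on (\<phi> ` (U \<inter> f -` V)) (\<psi> \<circ> f \<circ> inv_into U \<phi>)"
    using bspec[OF sm1 U(1)] by simp
  have Gs: "smooth_on Oset G" using bspec[OF sm2 V] unfolding Oset_def G_def by simp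
  have ks: "smooth_on (ball \<tau> e') (G \<circ> h)" by (rule smooth_on_compose[OF Gs oO hs' hO']) simp
  have kr: "\<forall>r\<in>ball \<tau> e' \<inter> {s..t}. (f \<circ> \<gamma>) r \<in> V \<and> \<psi> ((f \<circ> \<gamma>) r) = (G \<circ> h) r"
  proof
    fix r assume r: "r \<in> ball \<tau> e' \<inter> {s..t}"
    have "ball \<tau> e' \<subseteq> ball \<tau> e" by (simp add: e'_def subset_ball)
    then have "r \<in> ball \<tau> e \<inter> {s..t}" using r by blast
    then have rr: "\<gamma> r \<in> U" "\<phi> (\<gamma> r) = h r" using hr by auto
    have "h r \<in> Oset" using hO' r by auto
    then obtain u where u0: "u \<in> U \<inter> f -` V" "h r = \<phi> u" unfolding Oset_def by blast
    then have u: "u \<in> U" "f u \<in> V" "\<phi> u = \<phi> (\<gamma> r)" using rr by auto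
    have "u = \<gamma> r" by (rule inj_onD[OF atlas_facts(4)[OF atl U(1)] u(3) u(1) rr(1)])
    moreover have "inv_into U \<phi> (h r) = \<gamma> r" unfolding rr(2)[symmetric] by (rule inv_into_f_f[OF atlas_facts(4)[OF atl U(1)] rr(1)])
    ultimately show "(f \<circ> \<gamma>) r \<in> V \<and> \<psi> ((f \<circ> \<gamma>) r) = (G \<circ> h) r" using u by (simp add: G_def)
  qed
  show "\<exists>e>0. \<exists>h. smooth_on (ball \<tau> e) h \<and> (\<forall>r\<in>ball \<tau> e \<inter> {s..t}. (f \<circ> \<gamma>) r \<in> V \<and> \<psi> ((f \<circ> \<gamma>) r) = h r)"
    by (rule exI[of _ e'], rule conjI[OF e'], rule exI[of _ "G \<circ> h"], rule conjI[OF ks kr])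
qed

lemma cone_presD:
  assumes "cone_pres X A Cf f" "(U, \<phi>) \<in> A" "(V, \<psi>) \<in> A" "x \<in> U" "f x \<in> V"
  shows "frechet_derivative (\<psi> \<circ> f \<circ> inv_into U \<phi>) (at (\<phi> x)) ` Cf x (U, \<phi>) = Cf (f x) (V, \<psi>)"
proof -
  have "\<forall>(V, \<psi>)\<in>A. \<forall>x\<in>U. f x \<in> V \<longrightarrow>
        frechet_derivative (\<psi> \<circ> f \<circ> inv_into U \<phi>) (at (\<phi> x)) ` Cf x (U, \<phi>) = Cf (f x) (V, \<psi>)"
    using bspec[OF assms(1)[unfolded cone_pres_def] assms(2)] by simp
  from bspec[OF this assms(3)] assms(4,5) show ?thesis by simp
qed

lemma smooth_mapD:
  assumes "smooth_map X A f" "(U, \<phi>) \<in> A" "(V, \<psi>) \<in> A"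
  shows "smooth_on (\<phi> ` (U \<inter> f -` V)) (\<psi> \<circ> f \<circ> inv_into U \<phi>)"
proof -
  have sm1: "\<forall>(U, \<phi>)\<in>A. \<forall>(V, \<psi>)\<in>A. smooth_on (\<phi> ` (U \<inter> f -` V)) (\<psi> \<circ> f \<circ> inv_into U \<phi>)"
    using assms(1) unfolding smooth_map_def by blast
  have sm2: "\<forall>(V, \<psi>)\<in>A. smooth_on (\<phi> ` (U \<inter> f -` V)) (\<psi> \<circ> f \<circ> inv_into U \<phi>)"
    using bspec[OF sm1 assms(2)] by simp
  show ?thesis using bspec[OF sm2 assms(3)] by simp
qed

lemma deriv_comp:
  assumes atl: "smooth_atlas X A" and sm: "smooth_map X A f" and cp: "cone_pres X A Cf f"
    and cg: "continuous_map (subtopology euclidean {a..b}) X \<gamma>"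
    and t: "t \<in> {a..b}" and U: "(U, \<phi>) \<in> A" "\<gamma> t \<in> U" and V: "(V, \<psi>) \<in> A" "f (\<gamma> t) \<in> V"
    and vd: "((\<phi> \<circ> \<gamma>) has_vector_derivative v) (at t within {a..b})" and vC: "v \<in> Cf (\<gamma> t) (U, \<phi>)"
  shows "\<exists>w. ((\<psi> \<circ> (f \<circ> \<gamma>)) has_vector_derivative w) (at t within {a..b}) \<and> w \<in> Cf ((f \<circ> \<gamma>) t) (V, \<psi>)"
proof -
  have cf: "continuous_map X X f" using sm by (simp add: smooth_map_def)
  define W where "W = U \<inter> f -` V"
  have oW: "openin X W" unfolding W_def by (rule pre_open(1)[OF atl U(1) cf atlas_facts(2)[OF atl V(1)]])
  have oO: "open (\<phi> ` W)" unfolding W_def by (rule pre_open(2)[OF atl U(1) cf atlas_facts(2)[OF atl V(1)]])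
  define G where "G = \<psi> \<circ> f \<circ> inv_into U \<phi>"
  have Gs: "smooth_on (\<phi> ` W) G" unfolding W_def G_def by (rule smooth_mapD[OF sm U(1) V(1)])
  have gtW: "\<gamma> t \<in> W" using U V unfolding W_def by auto
  have Gd: "G differentiable at (\<phi> (\<gamma> t))" using smooth_onD1[OF Gs] gtW by blast
  define DG where "DG = frechet_derivative G (at (\<phi> (\<gamma> t)))"
  have hG: "(G has_derivative DG) (at ((\<phi> \<circ> \<gamma>) t))" unfolding DG_def comp_apply by (rule fd_works[OF Gd])
  have lin: "linear DG" using has_derivative_linear[OF hG] .
  have h1: "((\<phi> \<circ> \<gamma>) has_derivative (\<lambda>x. x *\<^sub>R v)) (at t within {a..b})"
    using vd unfolding has_vector_derivative_def .
  have "(G \<circ> (\<phi> \<circ> \<gamma>) has_derivative DG \<circ> (\<lambda>x. x *\<^sub>R v)) (at t within {a..b})"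
    by (rule diff_chain_within[OF h1 has_derivative_at_withinI[OF hG]])
  moreover have "DG \<circ> (\<lambda>x. x *\<^sub>R v) = (\<lambda>x. x *\<^sub>R DG v)"
    using lin by (simp add: fun_eq_iff linear_scale)
  ultimately have hc: "((G \<circ> (\<phi> \<circ> \<gamma>)) has_vector_derivative DG v) (at t within {a..b})"
    unfolding has_vector_derivative_def by simp
  have "openin (subtopology euclidean {a..b}) {r \<in> topspace (subtopology euclidean {a..b}). \<gamma> r \<in> W}"
    by (rule openin_continuous_map_preimage[OF cg oW])
  then have "\<exists>T. openin euclidean T \<and> {r \<in> topspace (subtopology euclidean {a..b}). \<gamma> r \<in> W} = T \<inter> {a..b}"
    unfolding openin_subtopology .
  then obtain T where T00: "openin euclidean T \<and> {r \<in> topspace (subtopology euclidean {a..b}). \<gamma> r \<in> W} = T \<inter> {a..b}" ..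
  note T0 = conjunct1[OF T00] conjunct2[OF T00]
  have T1: "open T" using T0(1) by simp
  note T = T1 T0(2)
  have tt: "t \<in> {r \<in> topspace (subtopology euclidean {a..b}). \<gamma> r \<in> W}" using t gtW by simp
  then have "t \<in> T \<inter> {a..b}" unfolding T(2) .
  then have "t \<in> T" by blast
  then obtain \<epsilon> where \<epsilon>: "\<epsilon> > 0" "ball t \<epsilon> \<subseteq> T" using T(1) open_contains_ball by blast
  have eq: "(G \<circ> (\<phi> \<circ> \<gamma>)) r = (\<psi> \<circ> (f \<circ> \<gamma>)) r" if r: "r \<in> {a..b}" "dist r t < \<epsilon>" for r
  proof -
    have "r \<in> T" using r \<epsilon>(2) by (auto simp: dist_commute)
    then have "r \<in> T \<inter> {a..b}" using r(1) by blast
    then have "r \<in> {r \<in> topspace (subtopology euclidean {a..b}). \<gamma> r \<in> W}" unfolding T(2) .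
    then have "\<gamma> r \<in> W" by blast
    then have "\<gamma> r \<in> U" unfolding W_def by auto
    then have "inv_into U \<phi> (\<phi> (\<gamma> r)) = \<gamma> r" by (rule inv_into_f_f[OF atlas_facts(4)[OF atl U(1)]])
    then show ?thesis by (simp add: G_def)
  qed
  have hv: "((\<psi> \<circ> (f \<circ> \<gamma>)) has_vector_derivative DG v) (at t within {a..b})"
    by (rule has_vector_derivative_transform_within[OF hc \<epsilon>(1) t]) (use eq in blast)
  have im: "DG ` Cf (\<gamma> t) (U, \<phi>) = Cf (f (\<gamma> t)) (V, \<psi>)"
    using cone_presD[OF cp U(1) V(1) U(2) V(2)] unfolding DG_def G_def .
  have "DG v \<in> DG ` Cf (\<gamma> t) (U, \<phi>)" using vC by (rule imageI)
  then have "DG v \<in> Cf ((f \<circ> \<gamma>) t) (V, \<psi>)" using im by simp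
  then show ?thesis using hv by blast
qed

lemma causal_curve_comp:
  assumes atl: "smooth_atlas X A" and sm: "smooth_map X A f" and cp: "cone_pres X A Cf f"
    and cc: "causal_curve X A Cf \<gamma> a b"
  shows "causal_curve X A Cf (f \<circ> \<gamma>) a b"
proof -
  have cf: "continuous_map X X f" using sm by (simp add: smooth_map_def)
  have pw: "piecewise_smooth_curve X A \<gamma> a b" using cc by (simp add: causal_curve_def)
  obtain F where F: "finite F" and Fc: "\<forall>t\<in>{a..b} - F. \<forall>(U, \<phi>)\<in>A. \<gamma> t \<in> U \<longrightarrow>
        (\<exists>v. ((\<phi> \<circ> \<gamma>) has_vector_derivative v) (at t within {a..b}) \<and> v \<in> Cf (\<gamma> t) (U, \<phi>))"
    using cc unfolding causal_curve_def by blast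
  have ab: "a \<le> b" and cg: "continuous_map (subtopology euclidean {a..b}) X \<gamma>"
    using pw by (simp_all add: piecewise_smooth_curve_def)
  obtain P where P: "finite P" "a \<in> P" "b \<in> P" "P \<subseteq> {a..b}"
    and Ps: "\<forall>s\<in>P. \<forall>t\<in>P. s < t \<and> {s<..<t} \<inter> P = {} \<longrightarrow> smooth_piece X A \<gamma> s t"
    using pw unfolding piecewise_smooth_curve_def by blast
  have cg': "continuous_map (subtopology euclidean {a..b}) X (f \<circ> \<gamma>)"
    by (rule continuous_map_compose[OF cg cf])
  have Ps': "\<forall>s\<in>P. \<forall>t\<in>P. s < t \<and> {s<..<t} \<inter> P = {} \<longrightarrow> smooth_piece X A (f \<circ> \<gamma>) s t"
  proof (intro ballI impI)
    fix s t assume s: "s \<in> P" and t: "t \<in> P" and st: "s < t \<and> {s<..<t} \<inter> P = {}"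
    have sub: "{s..t} \<subseteq> {a..b}" using s t P(4) by auto
    show "smooth_piece X A (f \<circ> \<gamma>) s t"
      by (rule smooth_piece_comp[OF atl sm cg sub]) (use Ps s t st in blast)
  qed
  have pw': "piecewise_smooth_curve X A (f \<circ> \<gamma>) a b"
    unfolding piecewise_smooth_curve_def using ab cg' P Ps' by blast
  have D: "\<forall>t\<in>{a..b} - F. \<forall>(V, \<psi>)\<in>A. (f \<circ> \<gamma>) t \<in> V \<longrightarrow>
        (\<exists>w. ((\<psi> \<circ> (f \<circ> \<gamma>)) has_vector_derivative w) (at t within {a..b}) \<and> w \<in> Cf ((f \<circ> \<gamma>) t) (V, \<psi>))"
  proof (intro ballI)
    fix t c assume t: "t \<in> {a..b} - F" and c: "c \<in> A"
    obtain V \<psi> where cV: "c = (V, \<psi>)" by (cases c)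
    have "(f \<circ> \<gamma>) t \<in> V \<longrightarrow>
        (\<exists>w. ((\<psi> \<circ> (f \<circ> \<gamma>)) has_vector_derivative w) (at t within {a..b}) \<and> w \<in> Cf ((f \<circ> \<gamma>) t) (V, \<psi>))"
    proof
      assume fV: "(f \<circ> \<gamma>) t \<in> V"
      have tab: "t \<in> {a..b}" using t by blast
      have "t \<in> topspace (subtopology euclidean {a..b})" using tab by simp
      then have "\<gamma> t \<in> topspace X" using continuous_map_image_subset_topspace[OF cg] by blast
      then obtain U \<phi> where U: "(U, \<phi>) \<in> A" "\<gamma> t \<in> U" using atlas_cover[OF atl] by blast
      have "\<forall>(U, \<phi>)\<in>A. \<gamma> t \<in> U \<longrightarrow>
        (\<exists>v. ((\<phi> \<circ> \<gamma>) has_vector_derivative v) (at t within {a..b}) \<and> v \<in> Cf (\<gamma> t) (U, \<phi>))"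
        using bspec[OF Fc t] .
      from bspec[OF this U(1)] U(2) obtain v where
        v: "((\<phi> \<circ> \<gamma>) has_vector_derivative v) (at t within {a..b})" "v \<in> Cf (\<gamma> t) (U, \<phi>)"
        by auto
      have V: "(V, \<psi>) \<in> A" "f (\<gamma> t) \<in> V" using c cV fV by auto
      show "\<exists>w. ((\<psi> \<circ> (f \<circ> \<gamma>)) has_vector_derivative w) (at t within {a..b}) \<and> w \<in> Cf ((f \<circ> \<gamma>) t) (V, \<psi>)"
        by (rule deriv_comp[OF atl sm cp cg tab U V v])
    qed
    then show "case c of (V, \<psi>) \<Rightarrow> (f \<circ> \<gamma>) t \<in> V \<longrightarrow>
        (\<exists>w. ((\<psi> \<circ> (f \<circ> \<gamma>)) has_vector_derivative w) (at t within {a..b}) \<and> w \<in> Cf ((f \<circ> \<gamma>) t) (V, \<psi>))"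
      using cV by simp
  qed
  show ?thesis unfolding causal_curve_def using pw' F D by blast
qed

lemma causal_s_pres:
  assumes atl: "smooth_atlas X A" and sm: "smooth_map X A f" and cp: "cone_pres X A Cf f"
    and xy: "(x, y) \<in> causal_s X A Cf"
  shows "(f x, f y) \<in> causal_s X A Cf"
proof -
  obtain \<gamma> a b where "causal_curve X A Cf \<gamma> a b" "\<gamma> a = x" "\<gamma> b = y"
    using xy unfolding causal_s_def by blast
  then have "causal_curve X A Cf (f \<circ> \<gamma>) a b" "(f \<circ> \<gamma>) a = f x" "(f \<circ> \<gamma>) b = f y"
    using causal_curve_comp[OF atl sm cp] by auto
  then show ?thesis unfolding causal_s_def by blast
qed

lemma causal_rel_pres:
  assumes atl: "smooth_atlas X A" and sm: "smooth_map X A f" and cp: "cone_pres X A Cf f"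
    and xy: "(x, y) \<in> causal_rel X A Cf"
  shows "(f x, f y) \<in> causal_rel X A Cf"
proof -
  have cf: "continuous_map X X f" using sm by (simp add: smooth_map_def)
  define ff where "ff = (\<lambda>(x, y). (f x, f y))"
  have c2: "continuous_map (prod_topology X X) (prod_topology X X) ff"
    unfolding ff_def continuous_map_prod_top using cf by blast
  have "ff ` causal_s X A Cf \<subseteq> causal_s X A Cf"
    unfolding ff_def using causal_s_pres[OF atl sm cp] by auto
  then have "ff ` (prod_topology X X closure_of causal_s X A Cf) \<subseteq> prod_topology X X closure_of causal_s X A Cf"
    using continuous_map_image_closure_subset[OF c2] closure_of_mono by blast
  then show ?thesis using xy unfolding causal_rel_def ff_def by force
qed

lemma cone_group_D:
  assumes "f \<in> cone_group X A Cf"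
  shows "smooth_map X A f" "cone_pres X A Cf f" "bij_betw f (topspace X) (topspace X)"
    "smooth_map X A (inv_into (topspace X) f)"
  using assms unfolding cone_group_def cone_pres_def diffeo_def by blast+

lemma inv_cone_pres:
  assumes atl: "smooth_atlas X A" and fg: "f \<in> cone_group X A Cf"
  shows "cone_pres X A Cf (inv_into (topspace X) f)"
proof -
  define g where "g = inv_into (topspace X) f"
  have smf: "smooth_map X A f" and cpf: "cone_pres X A Cf f" and bij: "bij_betw f (topspace X) (topspace X)"
    and smg: "smooth_map X A g" using cone_group_D[OF fg] unfolding g_def by blast+
  have inj: "inj_on f (topspace X)" and surj: "f ` topspace X = topspace X" using bij by (auto simp: bij_betw_def)
  have cf: "continuous_map X X f" using smf by (simp add: smooth_map_def)
  have cg: "continuous_map X X g" using smg by (simp add: smooth_map_def)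
  have key: "frechet_derivative (\<psi> \<circ> g \<circ> inv_into U \<phi>) (at (\<phi> x)) ` Cf x (U, \<phi>) = Cf (g x) (V, \<psi>)"
    if U: "(U, \<phi>) \<in> A" and V: "(V, \<psi>) \<in> A" and x: "x \<in> U" and gx: "g x \<in> V" for U \<phi> V \<psi> x
  proof -
    have xt: "x \<in> topspace X" using x atlas_facts(3)[OF atl U] by blast
    define y where "y = g x"
    have yt: "y \<in> topspace X" unfolding y_def g_def using xt surj by (metis inv_into_into)
    have fy: "f y = x" unfolding y_def g_def using xt surj by (simp add: f_inv_into_f)
    have yV: "y \<in> V" using gx y_def by simp
    have injU: "inj_on \<phi> U" and injV: "inj_on \<psi> V" using atlas_facts(4)[OF atl U] atlas_facts(4)[OF atl V] by auto
    define F where "F = \<psi> \<circ> g \<circ> inv_into U \<phi>"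
    define Gm where "Gm = \<phi> \<circ> f \<circ> inv_into V \<psi>"
    define \<Omega> where "\<Omega> = \<psi> ` (V \<inter> f -` U)"
    have oOm: "open \<Omega>" unfolding \<Omega>_def by (rule pre_open(2)[OF atl V cf atlas_facts(2)[OF atl U]])
    have oF: "open (\<phi> ` (U \<inter> g -` V))" by (rule pre_open(2)[OF atl U cg atlas_facts(2)[OF atl V]])
    have Gms: "smooth_on \<Omega> Gm" unfolding \<Omega>_def Gm_def by (rule smooth_mapD[OF smf V U])
    have Fs: "smooth_on (\<phi> ` (U \<inter> g -` V)) F" unfolding F_def by (rule smooth_mapD[OF smg U V])
    have yOm: "\<psi> y \<in> \<Omega>" unfolding \<Omega>_def using yV fy x by auto
    have xF: "\<phi> x \<in> \<phi> ` (U \<inter> g -` V)" using x gx by auto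
    have Gmy: "Gm (\<psi> y) = \<phi> x" unfolding Gm_def using inv_into_f_f[OF injV yV] fy by simp
    define DF where "DF = frechet_derivative F (at (\<phi> x))"
    define DG where "DG = frechet_derivative Gm (at (\<psi> y))"
    have hG: "(Gm has_derivative DG) (at (\<psi> y))" unfolding DG_def by (rule fd_works[OF smooth_onD1[OF Gms yOm]])
    have hF: "(F has_derivative DF) (at (Gm (\<psi> y)))" unfolding DF_def Gmy by (rule fd_works[OF smooth_onD1[OF Fs xF]])
    have c1: "(F \<circ> Gm has_derivative DF \<circ> DG) (at (\<psi> y))" by (rule diff_chain_at[OF hG hF])
    have idOm: "(F \<circ> Gm) w = w" if w: "w \<in> \<Omega>" for w
    proof -
      obtain v where v: "v \<in> V" "f v \<in> U" "w = \<psi> v" using w unfolding \<Omega>_def by blast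
      have vt: "v \<in> topspace X" using v(1) atlas_facts(3)[OF atl V] by blast
      have "inv_into V \<psi> w = v" using inv_into_f_f[OF injV v(1)] v(3) by simp
      moreover have "inv_into U \<phi> (\<phi> (f v)) = f v" by (rule inv_into_f_f[OF injU v(2)])
      moreover have "g (f v) = v" unfolding g_def by (rule inv_into_f_f[OF inj vt])
      ultimately show ?thesis unfolding F_def Gm_def using v(3) by simp
    qed
    have "((\<lambda>w. w) has_derivative (\<lambda>w. w)) (at (\<psi> y))" by (rule has_derivative_ident)
    then have c2: "(F \<circ> Gm has_derivative (\<lambda>w. w)) (at (\<psi> y))"
      by (rule has_derivative_transform_within_open[OF _ oOm yOm]) (use idOm in simp)
    have comp_id: "DF \<circ> DG = (\<lambda>w. w)" by (rule has_derivative_unique[OF c1 c2])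
    have cone_f: "DG ` Cf y (V, \<psi>) = Cf x (U, \<phi>)"
      using cone_presD[OF cpf V U yV] fy x unfolding DG_def Gm_def by simp
    have "DF ` Cf x (U, \<phi>) = (DF \<circ> DG) ` Cf y (V, \<psi>)" unfolding cone_f[symmetric] image_comp ..
    also have "\<dots> = Cf y (V, \<psi>)" unfolding comp_id by simp
    finally show ?thesis unfolding DF_def F_def y_def .
  qed
  show ?thesis unfolding cone_pres_def g_def[symmetric] using key by blast
qed

locale tsetup =
  fixes X :: "'p topology" and T :: "'p \<Rightarrow> 'p"
  assumes bijT: "bij_betw T (topspace X) (topspace X)"
begin

abbreviation "Ti \<equiv> inv_into (topspace X) T"
abbreviation "S \<equiv> Tpow X T"

lemma injT: "inj_on T (topspace X)" and surjT: "T ` topspace X = topspace X"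
  using bijT by (auto simp: bij_betw_def)

lemma T_top: "x \<in> topspace X \<Longrightarrow> T x \<in> topspace X" using surjT by blast
lemma Ti_top: "x \<in> topspace X \<Longrightarrow> Ti x \<in> topspace X" using surjT by (metis inv_into_into)
lemma T_Ti: "x \<in> topspace X \<Longrightarrow> T (Ti x) = x" using surjT by (simp add: f_inv_into_f)
lemma Ti_T: "x \<in> topspace X \<Longrightarrow> Ti (T x) = x" using injT by (simp add: inv_into_f_f)

lemma Tn_top: "x \<in> topspace X \<Longrightarrow> (T ^^ n) x \<in> topspace X"
  by (induction n) (auto simp: T_top)
lemma Tin_top: "x \<in> topspace X \<Longrightarrow> (Ti ^^ n) x \<in> topspace X"
  by (induction n) (auto simp: Ti_top)

lemma S_top: "x \<in> topspace X \<Longrightarrow> S k x \<in> topspace X"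
  unfolding Tpow_def using Tn_top Tin_top by auto

lemma S_nat: "S (int n) = T ^^ n" unfolding Tpow_def by simp
lemma S_0: "S 0 x = x" unfolding Tpow_def by simp

lemma S_succ: assumes x: "x \<in> topspace X" shows "S (k + 1) x = T (S k x)"
proof (cases "k \<ge> 0")
  case True
  then have "nat (k + 1) = Suc (nat k)" by simp
  then show ?thesis using True unfolding Tpow_def by simp
next
  case False
  show ?thesis
  proof (cases "k = -1")
    case True
    then show ?thesis unfolding Tpow_def using T_Ti[OF x] by simp
  next
    case False2: False
    then have k: "k + 1 < 0" using False by simp
    have "nat (- k) = Suc (nat (- (k + 1)))" using k by simp
    then have "S k x = Ti ((Ti ^^ nat (- (k + 1))) x)" unfolding Tpow_def using False by simp
    moreover have "S (k + 1) x = (Ti ^^ nat (- (k + 1))) x" unfolding Tpow_def using k by simp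
    ultimately show ?thesis using T_Ti[OF Tin_top[OF x]] by simp
  qed
qed

lemma S_pred: assumes x: "x \<in> topspace X" shows "S (k - 1) x = Ti (S k x)"
proof -
  have "S k x = T (S (k - 1) x)" using S_succ[OF x, of "k - 1"] by simp
  then show ?thesis using Ti_T[OF S_top[OF x]] by simp
qed

lemma S_add: assumes x: "x \<in> topspace X" shows "S i (S j x) = S (i + j) x"
proof (induction i rule: int_induct[where k=0])
  case base
  then show ?case by (simp add: S_0)
next
  case (step1 i)
  then show ?case using S_succ[OF S_top[OF x], of i] S_succ[OF x, of "i + j"] by (simp add: algebra_simps)
next
  case (step2 i)
  then show ?case using S_pred[OF S_top[OF x], of i] S_pred[OF x, of "i + j"] by (simp add: algebra_simps)
qed

lemma comm_Tn:
  assumes g: "\<forall>x\<in>topspace X. g (T x) = T (g x)" "\<forall>x\<in>topspace X. g x \<in> topspace X" and x: "x \<in> topspace X"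
  shows "g ((T ^^ n) x) = (T ^^ n) (g x)"
  using x by (induction n) (auto simp: g Tn_top)

lemma comm_Ti:
  assumes g: "\<forall>x\<in>topspace X. g (T x) = T (g x)" "\<forall>x\<in>topspace X. g x \<in> topspace X" and x: "x \<in> topspace X"
  shows "g (Ti x) = Ti (g x)"
proof -
  have "T (g (Ti x)) = g (T (Ti x))" using g(1) Ti_top[OF x] by simp
  then have "T (g (Ti x)) = g x" using T_Ti[OF x] by simp
  then have "Ti (T (g (Ti x))) = Ti (g x)" by simp
  then show ?thesis using Ti_T[OF g(2)[rule_format, OF Ti_top[OF x]]] by simp
qed

lemma comm_Tin:
  assumes g: "\<forall>x\<in>topspace X. g (T x) = T (g x)" "\<forall>x\<in>topspace X. g x \<in> topspace X" and x: "x \<in> topspace X"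
  shows "g ((Ti ^^ n) x) = (Ti ^^ n) (g x)"
  using x by (induction n) (auto simp: comm_Ti[OF g] Tin_top)

lemma comm_S:
  assumes g: "\<forall>x\<in>topspace X. g (T x) = T (g x)" "\<forall>x\<in>topspace X. g x \<in> topspace X" and x: "x \<in> topspace X"
  shows "g (S k x) = S k (g x)"
  unfolding Tpow_def using comm_Tn[OF g x] comm_Tin[OF g x] by simp

lemma pres_S:
  assumes pT: "\<forall>u v. (u, v) \<in> R \<longrightarrow> (T u, T v) \<in> R" and pTi: "\<forall>u v. (u, v) \<in> R \<longrightarrow> (Ti u, Ti v) \<in> R"
    and uv: "(u, v) \<in> R"
  shows "(S k u, S k v) \<in> R"
proof -
  have a: "((T ^^ n) u, (T ^^ n) v) \<in> R" for n by (induction n) (use uv pT in auto)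
  have b: "((Ti ^^ n) u, (Ti ^^ n) v) \<in> R" for n by (induction n) (use uv pTi in auto)
  show ?thesis unfolding Tpow_def using a b by simp
qed

lemma in_orb: "a \<in> topspace X \<Longrightarrow> orb X T a = orb X T w \<Longrightarrow> \<exists>k. a = S k w"
proof -
  assume "orb X T a = orb X T w"
  moreover have "a \<in> orb X T a" unfolding orb_def using S_0[of a] by (metis rangeI)
  ultimately have "a \<in> orb X T w" by simp
  then show ?thesis unfolding orb_def by blast
qed

lemma orb_Q: "a \<in> topspace X \<Longrightarrow> orb X T a \<in> quot_space X T"
  unfolding quot_space_def by blast

lemma comb:
  fixes R :: "('p \<times> 'p) set" and GG :: "('p \<Rightarrow> 'p) set"
  assumes trR: "trans R" and reflR: "\<forall>x\<in>topspace X. (x, x) \<in> R"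
    and pT: "\<forall>u v. (u, v) \<in> R \<longrightarrow> (T u, T v) \<in> R" and pTi: "\<forall>u v. (u, v) \<in> R \<longrightarrow> (Ti u, Ti v) \<in> R"
    and GGp: "\<And>g. g \<in> GG \<Longrightarrow> (\<forall>u v. (u, v) \<in> R \<longrightarrow> (g u, g v) \<in> R) \<and>
        (\<forall>x\<in>topspace X. g (T x) = T (g x)) \<and> (\<forall>x\<in>topspace X. g x \<in> topspace X)"
    and a0: "a0 \<in> topspace X" and c0: "c0 \<in> topspace X"
    and two: "\<forall>x\<in>quot_space X T. \<forall>y\<in>quot_space X T. \<exists>z\<in>quot_space X T.
        (x, z) \<in> {(orb X T (g a0), orb X T (g c0)) | g. g \<in> GG} \<and> (z, y) \<in> {(orb X T (g a0), orb X T (g c0)) | g. g \<in> GG}"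
    and p: "(c0, (T ^^ p) a0) \<in> R" and q: "(a0, (T ^^ q) c0) \<in> R" and n0: "(a0, (T ^^ n0) a0) \<in> R" "n0 > 0"
  shows "\<exists>N. \<forall>a\<in>topspace X. \<forall>b\<in>topspace X. \<exists>k\<le>N. (a, (T ^^ k) b) \<in> R \<or> (b, (T ^^ k) a) \<in> R"
proof -
  have trans: "(x, y) \<in> R \<Longrightarrow> (y, z) \<in> R \<Longrightarrow> (x, z) \<in> R" for x y z using trR by (meson transD)
  have pS: "(u, v) \<in> R \<Longrightarrow> (S k u, S k v) \<in> R" for u v k using pres_S[OF pT pTi] by blast
  have gfacts: "(g a0, S (int p) (g c0)) \<in> R \<Longrightarrow> True" for g by simp
  have gp: "(g c0, S (int p) (g a0)) \<in> R" "(g a0, S (int q) (g c0)) \<in> R" "(g a0, S (int n0) (g a0)) \<in> R"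
    if g: "g \<in> GG" for g
  proof -
    have pg: "\<forall>u v. (u, v) \<in> R \<longrightarrow> (g u, g v) \<in> R" and cg: "\<forall>x\<in>topspace X. g (T x) = T (g x)"
      and tg: "\<forall>x\<in>topspace X. g x \<in> topspace X" using GGp[OF g] by blast+
    have "(g c0, g (S (int p) a0)) \<in> R" using pg p by (simp add: S_nat)
    then show "(g c0, S (int p) (g a0)) \<in> R" using comm_S[OF cg tg a0] by simp
    have "(g a0, g (S (int q) c0)) \<in> R" using pg q by (simp add: S_nat)
    then show "(g a0, S (int q) (g c0)) \<in> R" using comm_S[OF cg tg c0] by simp
    have "(g a0, g (S (int n0) a0)) \<in> R" using pg n0(1) by (simp add: S_nat)
    then show "(g a0, S (int n0) (g a0)) \<in> R" using comm_S[OF cg tg a0] by simp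
  qed
  have gtop: "g \<in> GG \<Longrightarrow> x \<in> topspace X \<Longrightarrow> g x \<in> topspace X" for g x using GGp by blast
  have cyc: "(x, S (int n0) x) \<in> R" if x: "x \<in> topspace X" for x
  proof -
    obtain z where "z \<in> quot_space X T" and "(orb X T x, z) \<in> {(orb X T (g a0), orb X T (g c0)) | g. g \<in> GG}"
      using two orb_Q[OF x] by blast
    then obtain g where g: "g \<in> GG" "orb X T x = orb X T (g a0)" by blast
    obtain i where i: "x = S i (g a0)" using in_orb[OF x g(2)] by blast
    have "(S i (g a0), S i (S (int n0) (g a0))) \<in> R" using pS gp(3)[OF g(1)] by blast
    moreover have "S i (S (int n0) (g a0)) = S (int n0) (S i (g a0))"
      using S_add[OF gtop[OF g(1) a0]] by (simp add: add.commute)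
    ultimately show ?thesis using i by simp
  qed
  have cycm: "(x, S (int m * int n0) x) \<in> R" if x: "x \<in> topspace X" for x m
  proof (induction m)
    case 0
    then show ?case using reflR x by (simp add: S_0)
  next
    case (Suc m)
    have "(S (int m * int n0) x, S (int n0) (S (int m * int n0) x)) \<in> R" by (rule cyc[OF S_top[OF x]])
    moreover have "S (int n0) (S (int m * int n0) x) = S (int (Suc m) * int n0) x"
      using S_add[OF x] by (simp add: algebra_simps)
    ultimately have "(S (int m * int n0) x, S (int (Suc m) * int n0) x) \<in> R" by simp
    then show ?case by (rule trans[OF Suc.IH])
  qed
  define C where "C = 2 * int p + 2 * int q"
  define N where "N = nat C + n0"
  have fin: "\<exists>k\<le>N. (u, (T ^^ k) w) \<in> R"
    if uw: "(u, S s w) \<in> R" "w \<in> topspace X" and sC: "s \<le> C" for u w s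
  proof (cases "s \<ge> 0")
    case True
    then have "S s w = (T ^^ nat s) w" using S_nat[of "nat s"] by simp
    moreover have "nat s \<le> N" using sC True unfolding N_def by linarith
    ultimately show ?thesis using uw(1) by auto
  next
    case False
    define r where "r = s mod int n0"
    define m where "m = nat (- (s div int n0))"
    have r0: "0 \<le> r" "r < int n0" using n0(2) unfolding r_def by simp_all
    have "s div int n0 \<le> 0" using False n0(2) by (simp add: div_nonpos_pos_le0)
    then have "int m = - (s div int n0)" unfolding m_def by simp
    then have mm: "int m * int n0 = - (s div int n0 * int n0)" by simp
    have "s div int n0 * int n0 + r = s" unfolding r_def by (rule div_mult_mod_eq)
    then have sm: "s + int m * int n0 = r" using mm by linarith
    have "(S s w, S (int m * int n0) (S s w)) \<in> R" by (rule cycm[OF S_top[OF uw(2)]])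
    moreover have "S (int m * int n0) (S s w) = S r w" using S_add[OF uw(2)] sm by (simp add: add.commute)
    ultimately have "(S s w, S r w) \<in> R" by simp
    then have "(u, S r w) \<in> R" by (rule trans[OF uw(1)])
    moreover have "S r w = (T ^^ nat r) w" using S_nat[of "nat r"] r0 by simp
    moreover have "nat r \<le> N" using r0 unfolding N_def by linarith
    ultimately show ?thesis by auto
  qed
  have main: "\<exists>k\<le>N. (a, (T ^^ k) b) \<in> R \<or> (b, (T ^^ k) a) \<in> R"
    if a: "a \<in> topspace X" and b: "b \<in> topspace X" for a b
  proof -
    obtain z where z: "z \<in> quot_space X T" "(orb X T a, z) \<in> {(orb X T (g a0), orb X T (g c0)) | g. g \<in> GG}"
      "(z, orb X T b) \<in> {(orb X T (g a0), orb X T (g c0)) | g. g \<in> GG}"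
      using two orb_Q[OF a] orb_Q[OF b] by blast
    obtain g where g: "g \<in> GG" "orb X T a = orb X T (g a0)" "z = orb X T (g c0)" using z(2) by blast
    obtain h where h: "h \<in> GG" "z = orb X T (h a0)" "orb X T b = orb X T (h c0)" using z(3) by blast
    have ga0: "g a0 \<in> topspace X" and gc0: "g c0 \<in> topspace X" and ha0: "h a0 \<in> topspace X"
      and hc0: "h c0 \<in> topspace X" using gtop g(1) h(1) a0 c0 by blast+
    obtain i where i: "a = S i (g a0)" using in_orb[OF a g(2)] by blast
    have "orb X T (g c0) = orb X T (h a0)" using g(3) h(2) by simp
    then obtain j where j: "g c0 = S j (h a0)" using in_orb[OF gc0] by blast
    obtain l where l: "b = S l (h c0)" using in_orb[OF b h(3)] by blast
    have hc0b: "h c0 = S (- l) b" using l S_add[OF hc0, of "- l" l] S_0 by simp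
    have ha0g: "h a0 = S (- j) (g c0)" using j S_add[OF ha0, of "- j" j] S_0 by simp
    have ga0a: "g a0 = S (- i) a" using i S_add[OF ga0, of "- i" i] S_0 by simp
    have c1a: "(a, S (i + int q + j) (h a0)) \<in> R"
    proof -
      have "(S i (g a0), S i (S (int q) (g c0))) \<in> R" using pS gp(2)[OF g(1)] by blast
      moreover have "S i (S (int q) (g c0)) = S (i + int q + j) (h a0)"
        using S_add[OF gc0] S_add[OF ha0] j by (simp add: add.assoc)
      ultimately show ?thesis using i by simp
    qed
    have c1b: "(S (i + int q + j) (h a0), S (i + j + 2 * int q - l) b) \<in> R"
    proof -
      have "(S (i + int q + j) (h a0), S (i + int q + j) (S (int q) (h c0))) \<in> R" using pS gp(2)[OF h(1)] by blast
      moreover have "S (i + int q + j) (S (int q) (h c0)) = S (i + j + 2 * int q - l) b"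
        using S_add[OF hc0] S_add[OF b] hc0b by (simp add: algebra_simps)
      ultimately show ?thesis by simp
    qed
    have chain1: "(a, S (i + j + 2 * int q - l) b) \<in> R" using trans[OF c1a c1b] .
    have c2a: "(b, S (l + int p - j) (g c0)) \<in> R"
    proof -
      have "(S l (h c0), S l (S (int p) (h a0))) \<in> R" using pS gp(1)[OF h(1)] by blast
      moreover have "S l (S (int p) (h a0)) = S (l + int p - j) (g c0)"
        using S_add[OF ha0] S_add[OF gc0] ha0g by (simp add: algebra_simps)
      ultimately show ?thesis using l by simp
    qed
    have c2b: "(S (l + int p - j) (g c0), S (l + 2 * int p - j - i) a) \<in> R"
    proof -
      have "(S (l + int p - j) (g c0), S (l + int p - j) (S (int p) (g a0))) \<in> R" using pS gp(1)[OF g(1)] by blast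
      moreover have "S (l + int p - j) (S (int p) (g a0)) = S (l + 2 * int p - j - i) a"
        using S_add[OF ga0] S_add[OF a] ga0a by (simp add: algebra_simps)
      ultimately show ?thesis by simp
    qed
    have chain2: "(b, S (l + 2 * int p - j - i) a) \<in> R" using trans[OF c2a c2b] .
    show ?thesis
    proof (cases "i + j + 2 * int q - l \<le> C")
      case True
      then show ?thesis using fin[OF chain1 b] by blast
    next
      case False
      then have "l + 2 * int p - j - i \<le> C" unfolding C_def by linarith
      then show ?thesis using fin[OF chain2 a] by blast
    qed
  qed
  show ?thesis using main by blast
qed

end

theorem theorem5p8:
  fixes X :: "'p topology" and A :: "('p, 'e::euclidean_space) chart set"
    and Cf :: "('p, 'e) cone_field" and T :: "'p \<Rightarrow> 'p"
  assumes "causal_manifold X A Cf"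
    and "T \<in> cone_group X A Cf"
    and "infinite_cyclic_gen X T"
    and "properly_discontinuous_Z X T"
    and "causal_covering X A Cf T"
    and "dominant X A Cf T"
    and "almost_2_transitive_quot X A Cf T"
  shows "quasi_total X A Cf T"
proof -
  define R where "R = causal_rel X A Cf"
  have atl: "smooth_atlas X A" using assms(1)
    by (simp add: causal_manifold_def conal_manifold_def smooth_manifold_def)
  have po: "partial_order_on (topspace X) R" using assms(1) by (simp add: causal_manifold_def R_def)
  have trR: "trans R" and reflR: "\<forall>x\<in>topspace X. (x, x) \<in> R"
    using po by (auto simp: partial_order_on_def preorder_on_def refl_on_def)
  have smT: "smooth_map X A T" and cpT: "cone_pres X A Cf T" and bij: "bij_betw T (topspace X) (topspace X)"
    and smTi: "smooth_map X A (inv_into (topspace X) T)" using cone_group_D[OF assms(2)] by blast+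
  have cpTi: "cone_pres X A Cf (inv_into (topspace X) T)" by (rule inv_cone_pres[OF atl assms(2)])
  interpret tsetup X T by (unfold_locales) (rule bij)
  have pT: "\<forall>u v. (u, v) \<in> R \<longrightarrow> (T u, T v) \<in> R"
    unfolding R_def using causal_rel_pres[OF atl smT cpT] by blast
  have pTi: "\<forall>u v. (u, v) \<in> R \<longrightarrow> (Ti u, Ti v) \<in> R"
    unfolding R_def using causal_rel_pres[OF atl smTi cpTi] by blast
  have GGp: "(\<forall>u v. (u, v) \<in> R \<longrightarrow> (g u, g v) \<in> R) \<and>
        (\<forall>x\<in>topspace X. g (T x) = T (g x)) \<and> (\<forall>x\<in>topspace X. g x \<in> topspace X)"
    if g: "g \<in> centralizer X A Cf T" for g
  proof -
    have gc: "g \<in> cone_group X A Cf" and com: "\<forall>x\<in>topspace X. g (T x) = T (g x)"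
      using g unfolding centralizer_def by blast+
    have smg: "smooth_map X A g" and cpg: "cone_pres X A Cf g" and bg: "bij_betw g (topspace X) (topspace X)"
      using cone_group_D[OF gc] by blast+
    have "\<forall>u v. (u, v) \<in> R \<longrightarrow> (g u, g v) \<in> R"
      unfolding R_def using causal_rel_pres[OF atl smg cpg] by blast
    moreover have "\<forall>x\<in>topspace X. g x \<in> topspace X" using bg by (auto simp: bij_betw_def)
    ultimately show ?thesis using com by blast
  qed
  obtain a0 c0 where a0: "a0 \<in> topspace X" and c0: "c0 \<in> topspace X" and two:
    "\<forall>x\<in>quot_space X T. \<forall>y\<in>quot_space X T. \<exists>z\<in>quot_space X T.
        (x, z) \<in> {(orb X T (g a0), orb X T (g c0)) | g. g \<in> centralizer X A Cf T} \<and>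
        (z, y) \<in> {(orb X T (g a0), orb X T (g c0)) | g. g \<in> centralizer X A Cf T}"
    using assms(7) unfolding almost_2_transitive_quot_def Let_def by blast
  have dom: "\<forall>a\<in>topspace X. \<forall>b\<in>topspace X. \<exists>n::nat. (b, (T ^^ n) a) \<in> R \<and> (T ^^ n) a \<noteq> b"
    using assms(6) unfolding dominant_def R_def .
  obtain p where p: "(c0, (T ^^ p) a0) \<in> R" using dom a0 c0 by blast
  obtain q where q: "(a0, (T ^^ q) c0) \<in> R" using dom a0 c0 by blast
  obtain n0 where n0: "(a0, (T ^^ n0) a0) \<in> R" "(T ^^ n0) a0 \<noteq> a0" using dom a0 by blast
  have n0p: "n0 > 0" using n0(2) by (cases n0) auto
  have "\<exists>N. \<forall>a\<in>topspace X. \<forall>b\<in>topspace X. \<exists>k\<le>N. (a, (T ^^ k) b) \<in> R \<or> (b, (T ^^ k) a) \<in> R"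
    by (rule comb[OF trR reflR pT pTi GGp a0 c0 two p q n0(1) n0p])
  then show ?thesis unfolding quasi_total_def R_def .
qed

end
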